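(* Let $n\ge1$, $f_1,\dots,f_n\in\mathcal{S}(\mathbb{R}^d)$, and let $\varphi$ be the characteristic function of an $\mathbb{R}^d$-valued random variable. For $r>0$ let $f_{i,r}=f_i(\cdot/r)$. Then for every $\beta>0$ there exists $C(\beta)<\infty$ such that for all $r>0$, $$\sum_{x\in\mathbb{Z}^d\setminus\{0\}}\left|\circledast_{i=1}^n\left\{\overline{\mathcal{F}[f_{i,r}]}\,\varphi\right\}(x)\right|\le C(\beta)\,r^{-\beta}.$$
   Context: $\mathcal{F}[g](k)=\int g(x)e^{2\pi\mathbf{i}k\cdot x}dx$; characteristic functions are $\varphi(t)=\mathbb{E}[e^{2\pi\mathbf{i}t\cdot\xi}]$. For functions $g_1,\dots,g_n$, $\circledast_{i=1}^1 g_i=g_1$ and $\circledast_{i=1}^n g_i=g_n\ast\{\circledast_{i=1}^{n-1}g_i\}$ with $(g\ast h)(y)=\int g(z)h(y-z)dz$. *)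

theory Defs
  imports "HOL-Probability.Probability"
begin

definition partial_deriv :: "'d::finite \<Rightarrow> (real^'d \<Rightarrow> complex) \<Rightarrow> (real^'d \<Rightarrow> complex)" where
  "partial_deriv j g = (\<lambda>x. frechet_derivative g (at x) (axis j 1))"

definition partial_derivs :: "'d::finite list \<Rightarrow> (real^'d \<Rightarrow> complex) \<Rightarrow> (real^'d \<Rightarrow> complex)" where
  "partial_derivs js g = fold partial_deriv js g"

definition schwartz :: "(real^'d::finite \<Rightarrow> complex) \<Rightarrow> bool" where
  "schwartz g \<longleftrightarrow>
     (\<forall>js. (\<forall>x. partial_derivs js g differentiable (at x)) \<and>
           (\<forall>N::nat. bounded ((\<lambda>x. (1 + norm x) ^ N * norm (partial_derivs js g x)) ` UNIV)))"

definition fourier :: "(real^'d::finite \<Rightarrow> complex) \<Rightarrow> real^'d \<Rightarrow> complex" where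
  "fourier g k = (\<integral>x. g x * exp (2 * pi * \<i> * complex_of_real (k \<bullet> x)) \<partial>lborel)"

definition char_fun :: "'a measure \<Rightarrow> ('a \<Rightarrow> real^'d::finite) \<Rightarrow> real^'d \<Rightarrow> complex" where
  "char_fun M \<xi> t = (\<integral>\<omega>. exp (2 * pi * \<i> * complex_of_real (t \<bullet> \<xi> \<omega>)) \<partial>M)"

definition conv :: "(real^'d::finite \<Rightarrow> complex) \<Rightarrow> (real^'d \<Rightarrow> complex) \<Rightarrow> real^'d \<Rightarrow> complex" where
  "conv g h y = (\<integral>z. g z * h (y - z) \<partial>lborel)"

text \<open>Iterated convolution: conv_iter g 1 = g 1, conv_iter g n = g n * conv_iter g (n-1).
  (The value at n = 0 is an irrelevant convention.)\<close>
fun conv_iter :: "(nat \<Rightarrow> real^'d::finite \<Rightarrow> complex) \<Rightarrow> nat \<Rightarrow> real^'d \<Rightarrow> complex" where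
  "conv_iter g 0 = (\<lambda>_. 0)"
| "conv_iter g (Suc 0) = g 1"
| "conv_iter g (Suc (Suc n)) = conv (g (Suc (Suc n))) (conv_iter g (Suc n))"

definition int_lattice :: "(real^'d::finite) set" where
  "int_lattice = {x. \<forall>i. x $ i \<in> \<int>}"

end

theory Submission
  imports Defs
begin

lemma nn_integral_affine_eucl:
  fixes f :: "'a::euclidean_space \<Rightarrow> ennreal" and c :: real
  assumes [measurable]: "f \<in> borel_measurable borel" and c: "c \<noteq> 0"
  shows "(\<integral>\<^sup>+x. f x \<partial>lborel) = \<bar>c\<bar>^DIM('a) * (\<integral>\<^sup>+x. f (t + c *\<^sub>R x) \<partial>lborel)"
  by (subst lborel_affine[OF c, of t])
     (simp add: nn_integral_density nn_integral_distr nn_integral_cmult)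

lemma integrable_affine_eucl:
  fixes f :: "'a::euclidean_space \<Rightarrow> 'b :: {banach, second_countable_topology}"
  assumes f: "integrable lborel f" and c: "c \<noteq> 0"
  shows "integrable lborel (\<lambda>x. f (t + c *\<^sub>R x))"
  using f f[THEN borel_measurable_integrable] c unfolding integrable_iff_bounded
  by (subst (asm) nn_integral_affine_eucl[where c=c and t=t]) (auto simp: ennreal_mult_less_top)

lemma integrable_affine_eucl_iff:
  fixes f :: "'a::euclidean_space \<Rightarrow> 'b :: {banach, second_countable_topology}"
  shows "c \<noteq> 0 \<Longrightarrow> integrable lborel (\<lambda>x. f (t + c *\<^sub>R x)) \<longleftrightarrow> integrable lborel f"
  using
    integrable_affine_eucl[of f c t]
    integrable_affine_eucl[of "\<lambda>x. f (t + c *\<^sub>R x)" "1/c" "-t/\<^sub>R c"]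
  by (auto simp add: field_simps)

lemma integral_affine_eucl:
  fixes f :: "'a::euclidean_space \<Rightarrow> 'b :: {banach, second_countable_topology}" and c :: real
  assumes c: "c \<noteq> 0" shows "(\<integral>x. f x \<partial> lborel) = \<bar>c\<bar>^DIM('a) *\<^sub>R (\<integral>x. f (t + c *\<^sub>R x) \<partial>lborel)"
proof cases
  assume f[measurable]: "integrable lborel f" then show ?thesis
    using c f f[THEN borel_measurable_integrable] f[THEN integrable_affine_eucl, of c t]
    by (subst lborel_affine[OF c, of t])
       (simp add: integral_density integral_distr)
next
  assume "\<not> integrable lborel f" with c show ?thesis
    by (simp add: integrable_affine_eucl_iff not_integrable_integral_eq)
qed


lemma integrable_inv_sq: "integrable lborel (\<lambda>x::real. inverse (1 + x^2))"
  using integrable_inverse_1_plus_square by (simp add: set_integrable_def einterval_eq_UNIV)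

lemma integrable_prod_inv_sq:
  "integrable lborel (\<lambda>x::'a::euclidean_space. \<Prod>b\<in>Basis. inverse (1 + (x \<bullet> b)^2))"
proof (rule integrableI_nonneg)
  show "(\<lambda>x::'a. \<Prod>b\<in>Basis. inverse (1 + (x \<bullet> b)^2)) \<in> borel_measurable lborel" by measurable
  show "AE x in lborel. 0 \<le> (\<Prod>b\<in>Basis. inverse (1 + ((x::'a) \<bullet> b)^2))"
    by (auto intro!: prod_nonneg)
  have "(\<integral>\<^sup>+x. ennreal (\<Prod>b\<in>Basis. inverse (1 + ((x::'a) \<bullet> b)^2)) \<partial>lborel)
      = (\<integral>\<^sup>+x. (\<Prod>b\<in>(Basis::'a set). ennreal (inverse (1 + (x \<bullet> b)^2))) \<partial>lborel)"
    by (intro nn_integral_cong) (simp add: prod_ennreal)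
  also have "\<dots> = (\<Prod>b\<in>(Basis::'a set). (\<integral>\<^sup>+t. ennreal (inverse (1 + t^2)) \<partial>lborel))"
    by (rule nn_integral_lborel_prod) auto
  also have "\<dots> < \<infinity>"
  proof -
    have "(\<integral>\<^sup>+t. ennreal (inverse (1 + t^2)) \<partial>lborel) < \<infinity>"
      using integrable_inv_sq unfolding integrable_iff_bounded by simp
    then show ?thesis by (simp add: power_less_top_ennreal)
  qed
  finally show "(\<integral>\<^sup>+x. ennreal (\<Prod>b\<in>Basis. inverse (1 + ((x::'a) \<bullet> b)^2)) \<partial>lborel) < \<infinity>" .
qed

lemma poly_decay_le_prod:
  fixes x :: "'a::euclidean_space"
  assumes "N \<ge> 2 * DIM('a)"
  shows "1 / (1 + norm x)^N \<le> (\<Prod>b\<in>Basis. inverse (1 + (x \<bullet> b)^2))"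
proof -
  have "(\<Prod>b\<in>Basis. (1 + (x \<bullet> b)^2)) \<le> (\<Prod>b\<in>(Basis::'a set). (1 + norm x)^2)"
  proof (rule prod_mono, safe)
    fix b :: 'a assume b: "b \<in> Basis"
    have "\<bar>x \<bullet> b\<bar> \<le> norm x" using Basis_le_norm[OF b] .
    then have "(x \<bullet> b)^2 \<le> (norm x)^2" by (metis abs_ge_zero power2_abs power_mono)
    then show "1 + (x \<bullet> b)^2 \<le> (1 + norm x)^2" proof -
      have "0 \<le> norm x * 2" by simp
      with \<open>(x \<bullet> b)^2 \<le> (norm x)^2\<close> show ?thesis unfolding power2_sum power_one mult_1_right using norm_ge_zero[of x] by linarith
    qed
  qed auto
  also have "\<dots> = (1 + norm x)^(2 * DIM('a))" by (simp add: power_mult)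
  also have "\<dots> \<le> (1 + norm x)^N" using assms by (intro power_increasing) auto
  finally have le: "(\<Prod>b\<in>Basis. (1 + (x \<bullet> b)^2)) \<le> (1 + norm x)^N" .
  have pos: "0 < (\<Prod>b\<in>(Basis::'a set). (1 + (x \<bullet> b)^2))" by (intro prod_pos) (auto intro: add_pos_nonneg)
  have "1 / (1 + norm x)^N \<le> 1 / (\<Prod>b\<in>Basis. (1 + (x \<bullet> b)^2))"
    using le pos by (intro divide_left_mono) auto
  also have "\<dots> = (\<Prod>b\<in>Basis. inverse (1 + (x \<bullet> b)^2))"
    by (simp add: prod_inversef[symmetric] divide_inverse)
  finally show ?thesis .
qed

lemma integrable_poly_decay:
  assumes "N \<ge> 2 * DIM('a::euclidean_space)"
  shows "integrable lborel (\<lambda>x::'a. 1 / (1 + norm x)^N)"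
proof (rule Bochner_Integration.integrable_bound[OF integrable_prod_inv_sq])
  show "(\<lambda>x::'a. 1 / (1 + norm x)^N) \<in> borel_measurable lborel" by measurable
  show "AE x in lborel. norm (1 / (1 + norm (x::'a))^N) \<le> norm (\<Prod>b\<in>Basis. inverse (1 + (x \<bullet> b)^2))"
    using poly_decay_le_prod[OF assms] by (auto intro!: AE_I2 order_trans[OF _ abs_ge_self])
qed


lemma integral_norm_le_bound:
  fixes f :: "'a \<Rightarrow> 'b::{banach, second_countable_topology}"
  assumes B: "integrable M B" and le: "\<And>x. norm (f x) \<le> B x"
  shows "norm (integral\<^sup>L M f) \<le> integral\<^sup>L M B"
proof (cases "integrable M f")
  case True
  have "norm (integral\<^sup>L M f) \<le> (\<integral>x. norm (f x) \<partial>M)" by (rule integral_norm_bound)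
  also have "\<dots> \<le> integral\<^sup>L M B" using True B le by (intro integral_mono) auto
  finally show ?thesis .
next
  case False
  have "0 \<le> integral\<^sup>L M B" using le by (intro integral_nonneg_AE AE_I2) (meson norm_ge_zero order_trans)
  then show ?thesis using False by (simp add: not_integrable_integral_eq)
qed

definition dec :: "(real \<Rightarrow> real^'d::finite \<Rightarrow> complex) \<Rightarrow> bool" where
  "dec h \<longleftrightarrow> (\<forall>M::nat. \<exists>K. \<forall>r>0. \<forall>y. norm (h r y) \<le> K * r^DIM(real^'d) / (1 + r * norm y)^M)"

lemma scaled_decay_integral:
  fixes r :: real assumes r: "r > 0" and N: "N \<ge> 2 * DIM('a::euclidean_space)"
  shows "integrable lborel (\<lambda>z::'a. r^DIM('a) / (1 + r * norm z)^N)"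
    and "(\<integral>z. r^DIM('a) / (1 + r * norm (z::'a))^N \<partial>lborel) = (\<integral>w. 1 / (1 + norm (w::'a))^N \<partial>lborel)"
proof -
  have i: "integrable lborel (\<lambda>w::'a. 1 / (1 + norm w)^N)" by (rule integrable_poly_decay[OF N])
  have eq: "(\<lambda>z::'a. 1 / (1 + norm (0 + r *\<^sub>R z))^N) = (\<lambda>z. 1 / (1 + r * norm z)^N)"
    using r by (auto simp: fun_eq_iff)
  have "integrable lborel (\<lambda>z::'a. 1 / (1 + norm (0 + r *\<^sub>R z))^N)"
    using r i by (intro integrable_affine_eucl) auto
  then have i2: "integrable lborel (\<lambda>z::'a. 1 / (1 + r * norm z)^N)" unfolding eq .
  then show "integrable lborel (\<lambda>z::'a. r^DIM('a) / (1 + r * norm z)^N)"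
    using integrable_mult_right[OF i2, of "r^DIM('a)"] by simp
  have "(\<integral>w. 1 / (1 + norm (w::'a))^N \<partial>lborel) = \<bar>r\<bar>^DIM('a) *\<^sub>R (\<integral>z. 1 / (1 + norm (0 + r *\<^sub>R (z::'a)))^N \<partial>lborel)"
    using r by (intro integral_affine_eucl) auto
  also have "\<dots> = r^DIM('a) * (\<integral>z. 1 / (1 + r * norm (z::'a))^N \<partial>lborel)"
    unfolding eq using r by simp
  also have "\<dots> = (\<integral>z. r^DIM('a) * (1 / (1 + r * norm (z::'a))^N) \<partial>lborel)"
    by (rule integral_mult_right_zero[symmetric])
  also have "\<dots> = (\<integral>z. r^DIM('a) / (1 + r * norm (z::'a))^N \<partial>lborel)"
    by simp
  finally show "(\<integral>z. r^DIM('a) / (1 + r * norm (z::'a))^N \<partial>lborel) = (\<integral>w. 1 / (1 + norm (w::'a))^N \<partial>lborel)" by simp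
qed

lemma peetre_aux:
  fixes r :: real and y z :: "'a::real_normed_vector"
  assumes r: "r > 0"
  shows "1 / (1 + r * norm z)^(M+D) * (1 / (1 + r * norm (y - z))^(M+D))
           \<le> 1 / (1 + r * norm y)^M * (1 / (1 + r * norm z)^D)"
proof -
  define a where "a = 1 + r * norm z"
  define b where "b = 1 + r * norm (y - z)"
  define c where "c = 1 + r * norm y"
  have a1: "a \<ge> 1" and b1: "b \<ge> 1" and c1: "c \<ge> 1" using r by (auto simp: a_def b_def c_def)
  have "norm y \<le> norm z + norm (y - z)" by (metis add.commute diff_add_cancel norm_triangle_ineq)
  then have "r * norm y \<le> r * norm z + r * norm (y - z)" using r
    by (metis distrib_left mult_le_cancel_left_pos)
  moreover have "0 \<le> r * norm z * (r * norm (y - z))" using r by simp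
  ultimately have cab: "c \<le> a * b" by (simp add: a_def b_def c_def algebra_simps)
  have "c^M * a^D \<le> (a*b)^M * a^D" using cab c1 a1 by (intro mult_right_mono power_mono) auto
  also have "\<dots> = a^(M+D) * b^M" by (simp add: power_mult_distrib power_add)
  also have "\<dots> \<le> a^(M+D) * b^(M+D)" using a1 b1 by (intro mult_left_mono power_increasing) auto
  finally have le: "c^M * a^D \<le> a^(M+D) * b^(M+D)" .
  have pos: "0 < c^M * a^D" using a1 c1 by simp
  have "1 / (a^(M+D) * b^(M+D)) \<le> 1 / (c^M * a^D)"
    using le pos by (intro divide_left_mono) auto
  then show ?thesis by (simp add: a_def [symmetric] b_def [symmetric] c_def [symmetric])
qed


lemma dec_K_nonneg:
  assumes "\<forall>r>0. \<forall>y. norm (h r y) \<le> K * r^DIM(real^'d::finite) / (1 + r * norm (y::real^'d))^M"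
  shows "0 \<le> K"
  using assms[rule_format, of 1 0] by simp (meson norm_ge_zero order_trans)

lemma dec_conv:
  fixes g h :: "real \<Rightarrow> real^'d::finite \<Rightarrow> complex"
  assumes "dec g" "dec h" shows "dec (\<lambda>r. conv (g r) (h r))"
  unfolding dec_def
proof (intro allI)
  fix M :: nat
  define d where "d = DIM(real^'d)"
  define D where "D = 2 * d"
  define I where "I = (\<integral>w. 1 / (1 + norm (w::real^'d))^D \<partial>lborel)"
  obtain Kg where Kg: "\<forall>r>0. \<forall>y. norm (g r y) \<le> Kg * r^DIM(real^'d) / (1 + r * norm y)^(M+D)"
    using assms(1) unfolding dec_def by blast
  obtain Kh where Kh: "\<forall>r>0. \<forall>y. norm (h r y) \<le> Kh * r^DIM(real^'d) / (1 + r * norm y)^(M+D)"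
    using assms(2) unfolding dec_def by blast
  have Kg0: "0 \<le> Kg" by (rule dec_K_nonneg[OF Kg])
  have Kh0: "0 \<le> Kh" by (rule dec_K_nonneg[OF Kh])
  show "\<exists>K. \<forall>r>0. \<forall>y. norm (conv (g r) (h r) y) \<le> K * r^DIM(real^'d) / (1 + r * norm y)^M"
  proof (intro exI[of _ "Kg * Kh * I"] allI impI)
    fix r :: real and y :: "real^'d" assume r: "r > 0"
    define B where "B = (\<lambda>z::real^'d. (Kg * Kh * (r^d / (1 + r * norm y)^M)) * (r^d / (1 + r * norm z)^D))"
    have int: "integrable lborel B"
      unfolding B_def using scaled_decay_integral(1)[where 'a="real^'d", OF r, of D]
      by (intro integrable_mult_right) (simp add: D_def d_def)
    have le: "norm (g r z * h r (y - z)) \<le> B z" for z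
    proof -
      have a: "norm (g r z) \<le> Kg * r^d / (1 + r * norm z)^(M+D)" using Kg r by (simp add: d_def)
      have b: "norm (h r (y - z)) \<le> Kh * r^d / (1 + r * norm (y - z))^(M+D)" using Kh r by (simp add: d_def)
      have "norm (g r z * h r (y - z)) = norm (g r z) * norm (h r (y - z))" by (simp add: norm_mult)
      also have "\<dots> \<le> (Kg * r^d / (1 + r * norm z)^(M+D)) * (Kh * r^d / (1 + r * norm (y - z))^(M+D))"
        using a b by (intro mult_mono) (auto intro: order_trans[OF norm_ge_zero])
      also have "\<dots> = (Kg * Kh * r^d * r^d) * (1 / (1 + r * norm z)^(M+D) * (1 / (1 + r * norm (y - z))^(M+D)))"
        by simp
      also have "\<dots> \<le> (Kg * Kh * r^d * r^d) * (1 / (1 + r * norm y)^M * (1 / (1 + r * norm z)^D))"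
        using Kg0 Kh0 r by (intro mult_left_mono peetre_aux) auto
      also have "\<dots> = B z" by (simp add: B_def)
      finally show ?thesis .
    qed
    have "norm (conv (g r) (h r) y) \<le> integral\<^sup>L lborel B"
      unfolding conv_def by (rule integral_norm_le_bound[OF int le])
    also have "integral\<^sup>L lborel B = (Kg * Kh * (r^d / (1 + r * norm y)^M)) * (\<integral>z. r^d / (1 + r * norm (z::real^'d))^D \<partial>lborel)"
      unfolding B_def by (rule integral_mult_right_zero)
    also have "(\<integral>z. r^d / (1 + r * norm (z::real^'d))^D \<partial>lborel) = I"
      unfolding I_def d_def using scaled_decay_integral(2)[where 'a="real^'d", OF r, of D] by (simp add: D_def d_def)
    finally show "norm (conv (g r) (h r) y) \<le> Kg * Kh * I * r^DIM(real^'d) / (1 + r * norm y)^M"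
      by (simp add: d_def mult_ac)
  qed
qed


lemma schwartz_pd:
  assumes "schwartz g" shows "schwartz (partial_deriv j g)"
proof -
  have e: "partial_derivs js (partial_deriv j g) = partial_derivs (j # js) g" for js
    by (simp add: partial_derivs_def)
  show ?thesis using assms unfolding schwartz_def e by blast
qed

lemma schwartz_differentiable:
  assumes "schwartz g" shows "g differentiable at x"
proof -
  have "\<forall>x. partial_derivs [] g differentiable at x" using assms unfolding schwartz_def by blast
  then show ?thesis by (simp add: partial_derivs_def)
qed

lemma schwartz_has_derivative: "schwartz g \<Longrightarrow> (g has_derivative frechet_derivative g (at x)) (at x)"
  using schwartz_differentiable frechet_derivative_works by blast

lemma schwartz_cont: "schwartz g \<Longrightarrow> continuous_on UNIV g"
  by (meson continuous_at_imp_continuous_on differentiable_imp_continuous_within schwartz_differentiable)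

lemma schwartz_bound: "schwartz g \<Longrightarrow> \<exists>C. \<forall>x. norm (g x) \<le> C / (1 + norm x)^N"
proof -
  assume "schwartz g"
  then have "bounded (range (\<lambda>x. (1 + norm x) ^ N * norm (partial_derivs [] g x)))"
    unfolding schwartz_def by blast
  then obtain B where B: "\<forall>x. norm ((1 + norm x) ^ N * norm (g x)) \<le> B"
    by (auto simp: bounded_iff partial_derivs_def)
  have "norm (g x) \<le> B / (1 + norm x)^N" for x
  proof -
    have p: "0 < (1 + norm x)^N" by (simp add: add_pos_nonneg)
    have "(1 + norm x) ^ N * norm (g x) \<le> B" using B[rule_format, of x] by simp
    then show ?thesis using p by (simp add: pos_le_divide_eq mult.commute)
  qed
  then show ?thesis by blast
qed

lemma line_has_derivative:
  fixes g :: "'a::real_normed_vector \<Rightarrow> 'b::real_normed_vector"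
  assumes d: "(g has_derivative Dg) (at (x + t *\<^sub>R e))"
  shows "((\<lambda>s. g (x + s *\<^sub>R e)) has_derivative (\<lambda>s. s *\<^sub>R Dg e)) (at t)"
proof -
  have l: "((\<lambda>s::real. x + s *\<^sub>R e) has_derivative (\<lambda>s. s *\<^sub>R e)) (at t)"
    by (auto intro!: derivative_eq_intros)
  have "((g \<circ> (\<lambda>s. x + s *\<^sub>R e)) has_derivative (Dg \<circ> (\<lambda>s. s *\<^sub>R e))) (at t)"
    by (rule diff_chain_at[OF l]) (simp add: d)
  moreover have "(Dg \<circ> (\<lambda>s. s *\<^sub>R e)) = (\<lambda>s. s *\<^sub>R Dg e)"
    using linear.scaleR[OF bounded_linear.linear[OF has_derivative_bounded_linear[OF d]]]
    by (auto simp: fun_eq_iff)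
  ultimately show ?thesis by (simp add: o_def)
qed

lemma seq_deriv:
  fixes F :: "real \<Rightarrow> 'a::real_normed_vector"
  assumes "(F has_derivative (\<lambda>s. s *\<^sub>R D)) (at 0)"
  shows "(\<lambda>m. (F (inverse (real (Suc m))) - F 0) /\<^sub>R (inverse (real (Suc m)))) \<longlonglongrightarrow> D"
proof -
  define q where "q = (\<lambda>m. inverse (real (Suc m)))"
  have lim0: "((\<lambda>h. norm (F (0 + h) - F 0 - h *\<^sub>R D) / norm h) \<longlongrightarrow> 0) (at 0)"
    using assms unfolding has_derivative_at by blast
  have lim: "((\<lambda>h. norm (F h - F 0 - h *\<^sub>R D) / norm h) \<longlongrightarrow> 0) (at 0)"
    using lim0 by simp
  have fl: "filterlim q (at 0) sequentially"
    unfolding filterlim_at q_def using LIMSEQ_inverse_real_of_nat by auto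
  have c: "(\<lambda>m. norm (F (q m) - F 0 - q m *\<^sub>R D) / norm (q m)) \<longlonglongrightarrow> 0"
    using filterlim_compose[OF lim fl] by (simp add: o_def)
  have eq: "norm (F (q m) - F 0 - q m *\<^sub>R D) / norm (q m) = norm ((F (q m) - F 0) /\<^sub>R (q m) - D)" for m
  proof -
    have h: "q m > 0" by (simp add: q_def)
    have "F (q m) - F 0 - q m *\<^sub>R D = q m *\<^sub>R ((F (q m) - F 0) /\<^sub>R q m - D)" using h by (simp add: algebra_simps)
    then have "norm (F (q m) - F 0 - q m *\<^sub>R D) = q m * norm ((F (q m) - F 0) /\<^sub>R q m - D)" using h by simp
    then show ?thesis using h by simp
  qed
  have "(\<lambda>m. norm ((F (q m) - F 0) /\<^sub>R (q m) - D)) \<longlonglongrightarrow> 0"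
    using c unfolding eq .
  then have "(\<lambda>m. (F (q m) - F 0) /\<^sub>R (q m)) \<longlonglongrightarrow> D"
    by (simp add: LIM_zero_cancel tendsto_norm_zero_iff)
  then show ?thesis by (simp add: q_def)
qed


lemma schwartz_integrable:
  fixes g :: "real^'d::finite \<Rightarrow> complex"
  assumes "schwartz g" shows "integrable lborel g"
proof -
  obtain C where C: "\<forall>x. norm (g x) \<le> C / (1 + norm x)^(2 * DIM(real^'d))"
    using schwartz_bound[OF assms] by blast
  have i: "integrable lborel (\<lambda>x::real^'d. C * (1 / (1 + norm x)^(2 * DIM(real^'d))))"
    by (intro integrable_mult_right integrable_poly_decay) simp
  show ?thesis
  proof (rule Bochner_Integration.integrable_bound[OF i])
    show "g \<in> borel_measurable lborel"
      using schwartz_cont[OF assms] by (simp add: borel_measurable_continuous_onI)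
    show "AE x in lborel. norm (g x) \<le> norm (C * (1 / (1 + norm x)^(2 * DIM(real^'d))))"
    proof (intro AE_I2)
      fix x :: "real^'d"
      have "norm (g x) \<le> C / (1 + norm x)^(2 * DIM(real^'d))" using C by blast
      also have "\<dots> \<le> \<bar>C\<bar> / (1 + norm x)^(2 * DIM(real^'d))"
        by (intro divide_right_mono) auto
      finally show "norm (g x) \<le> norm (C * (1 / (1 + norm x)^(2 * DIM(real^'d))))"
        by simp
    qed
  qed
qed

lemma schwartz_integrable_shiftE:
  fixes g :: "real^'d::finite \<Rightarrow> complex"
  assumes "schwartz g"
  shows "integrable lborel (\<lambda>x. g (x + t) * exp (2 * pi * \<i> * complex_of_real (k \<bullet> x)))"
proof -
  have "integrable lborel (\<lambda>x. g (t + 1 *\<^sub>R x))"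
    by (rule integrable_affine_eucl[OF schwartz_integrable[OF assms]]) simp
  then have i: "integrable lborel (\<lambda>x. g (x + t))" by (simp add: add.commute)
  show ?thesis
  proof (rule Bochner_Integration.integrable_bound[OF i])
    have c1: "continuous_on UNIV (\<lambda>x. g (x + t))"
      by (rule continuous_on_compose2[OF schwartz_cont[OF assms]]) (auto intro!: continuous_intros)
    have "continuous_on UNIV (\<lambda>x. g (x + t) * exp (2 * pi * \<i> * complex_of_real (k \<bullet> x)))"
      by (intro continuous_intros c1)
    then show "(\<lambda>x. g (x + t) * exp (2 * pi * \<i> * complex_of_real (k \<bullet> x))) \<in> borel_measurable lborel"
      by (simp add: borel_measurable_continuous_onI)
    show "AE x in lborel. norm (g (x + t) * exp (2 * pi * \<i> * complex_of_real (k \<bullet> x))) \<le> norm (g (x + t))"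
      by (auto simp: norm_mult norm_exp_eq_Re)
  qed
qed


lemma E_shift:
  fixes k y :: "real^'d::finite"
  shows "exp (2 * pi * \<i> * complex_of_real (k \<bullet> (y - h *\<^sub>R axis j 1)))
       = exp (2 * pi * \<i> * complex_of_real (k \<bullet> y)) * exp (complex_of_real h * (- (2 * pi * \<i> * complex_of_real (k $ j))))"
proof -
  have "k \<bullet> (y - h *\<^sub>R axis j 1) = k \<bullet> y - h * (k $ j)"
    by (simp add: inner_diff_right inner_axis)
  then have "2 * pi * \<i> * complex_of_real (k \<bullet> (y - h *\<^sub>R axis j 1))
      = 2 * pi * \<i> * complex_of_real (k \<bullet> y) + complex_of_real h * (- (2 * pi * \<i> * complex_of_real (k $ j)))"
    by (simp add: algebra_simps)
  then show ?thesis by (simp only: exp_add)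
qed

lemma exp_seq_deriv:
  fixes c :: complex
  shows "(\<lambda>m. (exp (complex_of_real (inverse (real (Suc m))) * c) - 1) /\<^sub>R (inverse (real (Suc m)))) \<longlonglongrightarrow> c"
proof -
  have "((\<lambda>z. exp (z * c)) has_field_derivative c) (at (of_real 0))"
    by (auto intro!: derivative_eq_intros)
  then have "((\<lambda>h. exp (complex_of_real h * c)) has_vector_derivative c) (at 0)"
    by (rule has_vector_derivative_real_field)
  then have "((\<lambda>h. exp (complex_of_real h * c)) has_derivative (\<lambda>s. s *\<^sub>R c)) (at 0)"
    by (simp add: has_vector_derivative_def)
  from seq_deriv[OF this] show ?thesis by simp
qed


lemma fourier_pd:
  fixes g :: "real^'d::finite \<Rightarrow> complex"
  assumes sg: "schwartz g"
  shows "fourier (partial_deriv j g) k = - (2 * pi * \<i> * complex_of_real (k $ j)) * fourier g k"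
proof -
  define e :: "real^'d" where "e = axis j 1"
  define E where "E = (\<lambda>x::real^'d. exp (2 * pi * \<i> * complex_of_real (k \<bullet> x)))"
  define c where "c = - (2 * pi * \<i> * complex_of_real (k $ j))"
  define q where "q = (\<lambda>m::nat. inverse (real (Suc m)))"
  define Dg where "Dg = (\<lambda>y. frechet_derivative g (at y))"
  define g' where "g' = partial_deriv j g"
  define s where "s = (\<lambda>m x. ((g (x + q m *\<^sub>R e) - g x) /\<^sub>R q m) * E x)"
  have q0: "q m > 0" for m by (simp add: q_def)
  have q1: "q m \<le> 1" for m by (simp add: q_def inverse_le_1_iff)
  have Dg: "(g has_derivative Dg y) (at y)" for y
    unfolding Dg_def by (rule schwartz_has_derivative[OF sg])
  have g'_eq: "g' y = Dg y e" for y by (simp add: g'_def partial_deriv_def Dg_def e_def)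
  have sg': "schwartz g'" unfolding g'_def by (rule schwartz_pd[OF sg])
  have normE: "norm (E x) = 1" for x by (simp add: E_def norm_exp_eq_Re)
  have contE: "continuous_on UNIV E" unfolding E_def by (intro continuous_intros)
  have intE: "integrable lborel (\<lambda>x. g (x + t) * E x)" for t
    unfolding E_def by (rule schwartz_integrable_shiftE[OF sg])
  define F where "F = fourier g k"
  have F_eq: "F = (\<integral>x. g x * E x \<partial>lborel)" by (simp add: F_def fourier_def E_def)
  have shift: "(\<integral>x. g (x + h *\<^sub>R e) * E x \<partial>lborel) = exp (complex_of_real h * c) * F" for h
  proof -
    have "(\<integral>y. g y * E (y - h *\<^sub>R e) \<partial>lborel) = \<bar>1\<bar>^DIM(real^'d) *\<^sub>R (\<integral>x. g (h *\<^sub>R e + 1 *\<^sub>R x) * E (h *\<^sub>R e + 1 *\<^sub>R x - h *\<^sub>R e) \<partial>lborel)"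
      by (rule integral_affine_eucl) simp
    also have "\<dots> = (\<integral>x. g (x + h *\<^sub>R e) * E x \<partial>lborel)" by (simp add: add.commute)
    finally have 1: "(\<integral>x. g (x + h *\<^sub>R e) * E x \<partial>lborel) = (\<integral>y. g y * E (y - h *\<^sub>R e) \<partial>lborel)" ..
    have "(\<integral>y. g y * E (y - h *\<^sub>R e) \<partial>lborel) = (\<integral>y. g y * E y * exp (complex_of_real h * c) \<partial>lborel)"
      unfolding E_def e_def c_def E_shift by (simp add: mult.assoc)
    also have "\<dots> = F * exp (complex_of_real h * c)" unfolding F_eq by (rule integral_mult_left_zero)
    finally show ?thesis using 1 by (simp add: mult.commute)
  qed
  have S1: "integral\<^sup>L lborel (s m) = ((exp (complex_of_real (q m) * c) - 1) /\<^sub>R q m) * F" for m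
  proof -
    have "integral\<^sup>L lborel (s m) = (\<integral>x. inverse (q m) *\<^sub>R (g (x + q m *\<^sub>R e) * E x - g (x + 0) * E x) \<partial>lborel)"
    proof -
      have "s m = (\<lambda>x. inverse (q m) *\<^sub>R (g (x + q m *\<^sub>R e) * E x - g (x + 0) * E x))"
        unfolding s_def by (rule ext) (simp add: algebra_simps)
      then show ?thesis by simp
    qed
    also have "\<dots> = inverse (q m) *\<^sub>R ((\<integral>x. g (x + q m *\<^sub>R e) * E x \<partial>lborel) - (\<integral>x. g (x + 0) * E x \<partial>lborel))"
      using intE[of "q m *\<^sub>R e"] intE[of 0] by simp
    also have "\<dots> = inverse (q m) *\<^sub>R (exp (complex_of_real (q m) * c) * F - F)"
      using F_eq shift[of "q m"] by simp
    also have "\<dots> = ((exp (complex_of_real (q m) * c) - 1) /\<^sub>R q m) * F"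
      by (simp add: algebra_simps)
    finally show ?thesis .
  qed
  define N where "N = 2 * DIM(real^'d)"
  obtain C where C: "\<forall>y. norm (g' y) \<le> C / (1 + norm y)^N"
    using schwartz_bound[OF sg'] by blast
  define w where "w = (\<lambda>x::real^'d. C * 2^N * (1 / (1 + norm x)^N))"
  have intw: "integrable lborel w" unfolding w_def
    by (intro integrable_mult_right integrable_poly_decay) (simp add: N_def)
  have meas_s: "s m \<in> borel_measurable lborel" for m
  proof -
    have c1: "continuous_on UNIV (\<lambda>x. g (x + q m *\<^sub>R e))"
      by (rule continuous_on_compose2[OF schwartz_cont[OF sg]]) (auto intro!: continuous_intros)
    have "continuous_on UNIV (s m)" unfolding s_def
      by (intro continuous_intros c1 contE schwartz_cont[OF sg])
    then show ?thesis by (simp add: borel_measurable_continuous_onI)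
  qed
  have meas_f: "(\<lambda>x. g' x * E x) \<in> borel_measurable lborel"
  proof -
    have "continuous_on UNIV (\<lambda>x. g' x * E x)"
      by (intro continuous_intros contE schwartz_cont[OF sg'])
    then show ?thesis by (simp add: borel_measurable_continuous_onI)
  qed
  have lim: "(\<lambda>m. s m x) \<longlonglongrightarrow> g' x * E x" for x
  proof -
    have "((\<lambda>h. g (x + h *\<^sub>R e)) has_derivative (\<lambda>h. h *\<^sub>R Dg x e)) (at 0)"
      by (rule line_has_derivative) (simp add: Dg)
    from seq_deriv[OF this] have "(\<lambda>m. (g (x + q m *\<^sub>R e) - g x) /\<^sub>R q m) \<longlonglongrightarrow> g' x"
      by (simp add: q_def g'_eq)
    then show ?thesis unfolding s_def by (intro tendsto_mult_right)
  qed
  have bound: "norm (s m x) \<le> w x" for m x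
  proof -
    define h where "h = q m"
    have h0: "0 < h" and h1: "h \<le> 1" using q0 q1 by (auto simp: h_def)
    have "\<exists>t\<in>{0<..<h}. norm (g (x + h *\<^sub>R e) - g (x + 0 *\<^sub>R e)) \<le> norm ((h - 0) *\<^sub>R Dg (x + t *\<^sub>R e) e)"
    proof (rule mvt_general[where f = "\<lambda>t. g (x + t *\<^sub>R e)"])
      show "0 < h" by (rule h0)
      have "continuous_on UNIV (\<lambda>t. g (x + t *\<^sub>R e))"
        by (rule continuous_on_compose2[OF schwartz_cont[OF sg]]) (auto intro!: continuous_intros)
      then show "continuous_on {0..h} (\<lambda>t. g (x + t *\<^sub>R e))" by (rule continuous_on_subset) auto
      show "((\<lambda>t. g (x + t *\<^sub>R e)) has_derivative (\<lambda>s. s *\<^sub>R Dg (x + t *\<^sub>R e) e)) (at t)" for t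
        by (rule line_has_derivative[OF Dg])
    qed
    then obtain t where t: "0 < t" "t < h"
      and mvt: "norm (g (x + h *\<^sub>R e) - g x) \<le> h * norm (g' (x + t *\<^sub>R e))"
      using h0 by (auto simp: g'_eq)
    have "1 + norm x \<le> 2 * (1 + norm (x + t *\<^sub>R e))"
    proof -
      have "norm x \<le> norm (x + t *\<^sub>R e) + norm (t *\<^sub>R e)" by (metis add_diff_cancel norm_triangle_ineq4)
      also have "norm (t *\<^sub>R e) = t" using t by (simp add: e_def)
      finally have "norm x \<le> norm (x + t *\<^sub>R e) + t" .
      moreover have "0 \<le> norm (x + t *\<^sub>R e)" by simp
      ultimately have "1 + norm x \<le> 2 + 2 * norm (x + t *\<^sub>R e)" using t h1 by linarith
      then show ?thesis by simp
    qed
    then have "(1 + norm x)^N \<le> (2 * (1 + norm (x + t *\<^sub>R e)))^N" by (intro power_mono) auto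
    then have pw: "(1 + norm x)^N \<le> 2^N * (1 + norm (x + t *\<^sub>R e))^N" by (simp only: power_mult_distrib)
    have C0: "0 \<le> C" using C[rule_format, of 0] by simp (meson norm_ge_zero order_trans)
    have "norm (g' (x + t *\<^sub>R e)) \<le> C / (1 + norm (x + t *\<^sub>R e))^N" using C by blast
    also have "\<dots> \<le> C * 2^N / (1 + norm x)^N"
    proof -
      have p1: "0 < (1 + norm (x + t *\<^sub>R e))^N" by (simp add: add_pos_nonneg)
      have p2: "0 < (1 + norm x)^N" by (simp add: add_pos_nonneg)
      have "C * (1 + norm x)^N \<le> C * (2^N * (1 + norm (x + t *\<^sub>R e))^N)" by (rule mult_left_mono[OF pw C0])
      then show ?thesis using p1 p2 by (simp add: divide_simps mult_ac)
    qed
    finally have gb: "norm (g' (x + t *\<^sub>R e)) \<le> C * 2^N / (1 + norm x)^N" .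
    have "norm (s m x) = norm (g (x + h *\<^sub>R e) - g x) / h"
      unfolding s_def h_def using q0[of m] by (simp add: norm_mult normE divide_inverse mult.commute)
    also have "\<dots> \<le> norm (g' (x + t *\<^sub>R e))" using mvt h0 by (simp add: divide_simps mult.commute)
    also have "\<dots> \<le> w x" using gb by (simp add: w_def)
    finally show ?thesis .
  qed
  have S2: "(\<lambda>m. integral\<^sup>L lborel (s m)) \<longlonglongrightarrow> (\<integral>x. g' x * E x \<partial>lborel)"
    by (rule integral_dominated_convergence[OF meas_f meas_s intw]) (auto simp: lim bound)
  have S3: "(\<lambda>m. integral\<^sup>L lborel (s m)) \<longlonglongrightarrow> c * F"
    unfolding S1 q_def by (intro tendsto_mult_right exp_seq_deriv)
  have "(\<integral>x. g' x * E x \<partial>lborel) = c * F" using LIMSEQ_unique[OF S2 S3] .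
  then show ?thesis by (simp add: fourier_def g'_def E_def c_def F_def)
qed


lemma fourier_pd_iter:
  fixes g :: "real^'d::finite \<Rightarrow> complex"
  assumes sg: "schwartz g"
  shows "schwartz ((partial_deriv j ^^ m) g) \<and>
         fourier ((partial_deriv j ^^ m) g) k = (- (2 * pi * \<i> * complex_of_real (k $ j)))^m * fourier g k"
proof (induction m)
  case 0 then show ?case using sg by simp
next
  case (Suc m)
  have s: "schwartz ((partial_deriv j ^^ m) g)" using Suc by blast
  have "fourier ((partial_deriv j ^^ Suc m) g) k = fourier (partial_deriv j ((partial_deriv j ^^ m) g)) k"
    by simp
  also have "\<dots> = - (2 * pi * \<i> * complex_of_real (k $ j)) * fourier ((partial_deriv j ^^ m) g) k"
    by (rule fourier_pd[OF s])
  also have "\<dots> = (- (2 * pi * \<i> * complex_of_real (k $ j)))^Suc m * fourier g k"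
    using Suc by (simp only: power_Suc mult.assoc)
  finally show ?case using schwartz_pd[OF s] by simp
qed

lemma fourier_bounded:
  fixes g :: "real^'d::finite \<Rightarrow> complex"
  assumes sg: "schwartz g"
  shows "\<exists>B. \<forall>k. norm (fourier g k) \<le> B"
proof -
  have "norm (fourier g k) \<le> (\<integral>x. norm (g x) \<partial>lborel)" for k
  proof -
    have "norm (fourier g k) \<le> (\<integral>x. norm (g x * exp (2 * pi * \<i> * complex_of_real (k \<bullet> x))) \<partial>lborel)"
      unfolding fourier_def by (rule integral_norm_bound)
    also have "\<dots> = (\<integral>x. norm (g x) \<partial>lborel)" by (simp add: norm_mult norm_exp_eq_Re)
    finally show ?thesis .
  qed
  then show ?thesis by blast
qed

lemma fourier_decay_coord:
  fixes g :: "real^'d::finite \<Rightarrow> complex"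
  assumes sg: "schwartz g"
  shows "\<exists>B. \<forall>k. \<bar>k $ j\<bar>^m * norm (fourier g k) \<le> B"
proof -
  obtain B where B: "\<forall>k. norm (fourier ((partial_deriv j ^^ m) g) k) \<le> B"
    using fourier_bounded fourier_pd_iter[OF sg] by blast
  have "\<bar>k $ j\<bar>^m * norm (fourier g k) \<le> B" for k
  proof -
    have "\<bar>k $ j\<bar>^m \<le> (2 * pi * \<bar>k $ j\<bar>)^m"
    proof (intro power_mono)
      have "1 \<le> 2 * pi" using pi_ge_two by simp
      then show "\<bar>k $ j\<bar> \<le> 2 * pi * \<bar>k $ j\<bar>" by (simp add: mult_le_cancel_right1)
    qed simp
    then have "\<bar>k $ j\<bar>^m * norm (fourier g k) \<le> (2 * pi * \<bar>k $ j\<bar>)^m * norm (fourier g k)"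
      by (intro mult_right_mono) auto
    also have "\<dots> = norm (fourier ((partial_deriv j ^^ m) g) k)"
      using fourier_pd_iter[OF sg, where j=j and m=m and k=k] by (simp add: norm_mult norm_power)
    also have "\<dots> \<le> B" using B by blast
    finally show ?thesis .
  qed
  then show ?thesis by blast
qed


lemma fourier_decay:
  fixes g :: "real^'d::finite \<Rightarrow> complex"
  assumes sg: "schwartz g"
  shows "\<exists>K. \<forall>k. norm (fourier g k) \<le> K / (1 + norm k)^M"
proof -
  obtain B0 where B0: "\<forall>k. norm (fourier g k) \<le> B0" using fourier_bounded[OF sg] by blast
  have "\<forall>j. \<exists>B. \<forall>k. \<bar>k $ j\<bar>^M * norm (fourier g k) \<le> B" using fourier_decay_coord[OF sg] by blast
  then obtain Bj where Bj: "\<And>j k. \<bar>k $ j\<bar>^M * norm (fourier g k) \<le> Bj j" by metis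
  define d where "d = real CARD('d)"
  define K where "K = (d + 1)^M * (B0 + (\<Sum>j\<in>UNIV. Bj j))"
  have "norm (fourier g k) \<le> K / (1 + norm k)^M" for k
  proof -
    define a where "a = (\<lambda>j. \<bar>k $ j\<bar>)"
    define A where "A = insert 1 (range a)"
    define m where "m = Max A"
    have finA: "finite A" by (simp add: A_def)
    have m1: "1 \<le> m" unfolding m_def A_def by (rule Max_ge) (auto simp: A_def)
    have am: "a j \<le> m" for j unfolding m_def using finA by (intro Max_ge) (auto simp: A_def)
    have a0: "0 \<le> a j" for j by (simp add: a_def)
    define nF where "nF = norm (fourier g k)"
    have nF0: "0 \<le> nF" by (simp add: nF_def)
    have "norm k \<le> (\<Sum>j\<in>UNIV. a j)" unfolding a_def by (rule norm_le_l1_cart)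
    also have "\<dots> \<le> (\<Sum>j\<in>(UNIV::'d set). m)" by (intro sum_mono am)
    also have "\<dots> = d * m" by (simp add: d_def)
    finally have "1 + norm k \<le> (d + 1) * m" using m1 by (simp add: algebra_simps)
    then have p1: "(1 + norm k)^M \<le> ((d + 1) * m)^M" by (intro power_mono) auto
    have mM: "m^M \<le> 1 + (\<Sum>j\<in>UNIV. a j ^ M)"
    proof -
      have "m \<in> A" unfolding m_def using finA by (intro Max_in) (auto simp: A_def)
      then consider "m = 1" | j where "m = a j" by (auto simp: A_def)
      then show ?thesis
      proof cases
        case 1 then show ?thesis using a0 by (simp add: sum_nonneg)
      next
        case (2 j)
        have "a j ^ M \<le> (\<Sum>j\<in>UNIV. a j ^ M)" by (rule member_le_sum) (auto simp: a0)
        then show ?thesis using 2 by simp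
      qed
    qed
    have "(1 + norm k)^M * nF \<le> ((d + 1) * m)^M * nF" using p1 nF0 by (rule mult_right_mono)
    also have "\<dots> = (d + 1)^M * (m^M * nF)" by (simp add: power_mult_distrib)
    also have "\<dots> \<le> (d + 1)^M * ((1 + (\<Sum>j\<in>UNIV. a j ^ M)) * nF)"
      using mM nF0 by (intro mult_left_mono mult_right_mono) (auto simp: d_def)
    also have "(1 + (\<Sum>j\<in>UNIV. a j ^ M)) * nF = nF + (\<Sum>j\<in>UNIV. a j ^ M * nF)"
      by (simp add: distrib_right sum_distrib_right)
    also have "nF + (\<Sum>j\<in>UNIV. a j ^ M * nF) \<le> B0 + (\<Sum>j\<in>UNIV. Bj j)"
      using B0 Bj unfolding nF_def a_def by (intro add_mono sum_mono) auto
    finally have "(1 + norm k)^M * nF \<le> K"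
      unfolding K_def by (auto simp: d_def intro: order_trans)
    then show ?thesis unfolding nF_def by (simp add: pos_le_divide_eq mult.commute add_pos_nonneg)
  qed
  then show ?thesis by blast
qed


lemma sum1d:
  fixes p :: real assumes p: "p > 1"
  shows "(\<lambda>k::int. (1 + \<bar>real_of_int k\<bar>) powr -p) summable_on UNIV"
proof -
  have s0: "summable (\<lambda>n. real n powr -p)" using p by (simp add: summable_real_powr_iff)
  have s: "summable (\<lambda>n. real (Suc n) powr -p)"
    using summable_Suc_iff[of "\<lambda>n. real n powr -p"] s0 by simp
  have nat: "(\<lambda>n::nat. (1 + real n) powr -p) summable_on UNIV"
    using s by (subst summable_on_UNIV_nonneg_real_iff) (auto simp: add.commute)
  have e1: "((\<lambda>k::int. (1 + \<bar>real_of_int k\<bar>) powr -p) \<circ> int) = (\<lambda>n::nat. (1 + real n) powr -p)"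
    by (auto simp: fun_eq_iff)
  have e2: "((\<lambda>k::int. (1 + \<bar>real_of_int k\<bar>) powr -p) \<circ> (\<lambda>n. - int n)) = (\<lambda>n::nat. (1 + real n) powr -p)"
    by (auto simp: fun_eq_iff)
  have a1: "(\<lambda>k::int. (1 + \<bar>real_of_int k\<bar>) powr -p) summable_on (range int)"
    by (subst summable_on_reindex) (auto simp: e1 nat)
  have a2: "(\<lambda>k::int. (1 + \<bar>real_of_int k\<bar>) powr -p) summable_on (range (\<lambda>n. - int n))"
    by (subst summable_on_reindex) (auto simp: e2 nat inj_on_def)
  have U: "(UNIV::int set) = range int \<union> range (\<lambda>n. - int n)"
  proof -
    have "k \<in> range int \<union> range (\<lambda>n. - int n)" for k :: int
    proof -
      have "k = int (nat k) \<or> k = - int (nat (-k))" by auto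
      then show ?thesis by blast
    qed
    then show ?thesis by blast
  qed
  show ?thesis unfolding U by (rule summable_on_union[OF a1 a2])
qed

lemma lattice_prod_summable:
  fixes p :: real assumes p: "p > 1"
  shows "(\<lambda>x::real^'d::finite. \<Prod>i\<in>UNIV. (1 + \<bar>x$i\<bar>) powr -p) summable_on int_lattice"
proof -
  define h :: "('d \<Rightarrow> int) \<Rightarrow> real^'d" where "h = (\<lambda>z. \<chi> i. real_of_int (z i))"
  have inj: "inj_on h UNIV"
    unfolding h_def inj_on_def by (auto simp: vec_eq_iff fun_eq_iff)
  have L: "int_lattice = h ` UNIV"
  proof safe
    fix x :: "real^'d" assume "x \<in> int_lattice"
    then have "\<forall>i. \<exists>k. x$i = real_of_int k" unfolding int_lattice_def by (auto elim: Ints_cases)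
    then obtain z where "\<forall>i. x$i = real_of_int (z i)" by metis
    then have "x = h z" unfolding h_def by (auto simp: vec_eq_iff)
    then show "x \<in> range h" by auto
  qed (auto simp: h_def int_lattice_def)
  define a where "a = (\<lambda>(i::'d) (k::int). (1 + \<bar>real_of_int k\<bar>) powr -p)"
  have comp: "((\<lambda>x::real^'d. \<Prod>i\<in>UNIV. (1 + \<bar>x$i\<bar>) powr -p) \<circ> h) = (\<lambda>z. \<Prod>i\<in>UNIV. a i (z i))"
    by (auto simp: fun_eq_iff h_def a_def)
  have "\<And>i. i \<in> UNIV \<Longrightarrow> Infinite_Set_Sum.abs_summable_on (a i) (UNIV::int set)"
  proof -
    fix i
    have "Infinite_Sum.abs_summable_on (a i) UNIV" unfolding a_def using sum1d[OF p] by simp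
    then show "Infinite_Set_Sum.abs_summable_on (a i) (UNIV::int set)" using abs_summable_equivalent[of "a i" UNIV] by simp
  qed
  then have "Infinite_Set_Sum.abs_summable_on (\<lambda>z. \<Prod>i\<in>UNIV. a i (z i)) (PiE UNIV (\<lambda>_. (UNIV::int set)))"
    by (intro abs_summable_on_prod_PiE) auto
  then have "Infinite_Sum.abs_summable_on (\<lambda>z. \<Prod>i\<in>UNIV. a i (z i)) (UNIV :: ('d \<Rightarrow> int) set)"
    using abs_summable_equivalent[of "\<lambda>z. \<Prod>i\<in>UNIV. a i (z i)" "PiE UNIV (\<lambda>_. (UNIV::int set))"] by simp
  then have "(\<lambda>z. \<Prod>i\<in>UNIV. a i (z i)) summable_on (UNIV :: ('d \<Rightarrow> int) set)"
    by (rule abs_summable_summable)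
  then show ?thesis unfolding L by (subst summable_on_reindex[OF inj]) (simp add: comp)
qed


lemma lattice_norm_ge1:
  assumes "x \<in> int_lattice - {0}" shows "norm (x::real^'d::finite) \<ge> 1"
proof -
  from assms obtain i where "x$i \<noteq> 0" by (auto simp: vec_eq_iff)
  moreover have "x$i \<in> \<int>" using assms by (auto simp: int_lattice_def)
  ultimately have "\<bar>x$i\<bar> \<ge> 1"
  proof -
    assume a: "x$i \<noteq> 0" "x$i \<in> \<int>"
    then obtain k where k: "x$i = of_int k" by (auto elim: Ints_cases)
    with a have "k \<noteq> 0" by auto
    then have "\<bar>k\<bar> \<ge> 1" by linarith
    then have "real_of_int \<bar>k\<bar> \<ge> 1" by linarith
    then show ?thesis using k by simp
  qed
  then show ?thesis using component_le_norm_cart[of x i] by linarith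
qed

lemma norm_powr_le_prod:
  fixes x :: "real^'d::finite" and s :: real
  assumes x: "norm x \<ge> 1" and s: "s > 0"
  shows "norm x powr -s \<le> 2 powr s * (\<Prod>i\<in>UNIV. (1 + \<bar>x$i\<bar>) powr -(s / CARD('d)))"
proof -
  define p where "p = s / CARD('d)"
  define N where "N = 1 + norm x"
  define q where "q = (\<Prod>i\<in>(UNIV::'d set). 1 + \<bar>x$i\<bar>)"
  have p: "p > 0" using s by (simp add: p_def)
  have q1: "q \<ge> 1" unfolding q_def by (intro prod_ge_1) auto
  have N1: "N \<ge> 1" by (simp add: N_def)
  have "q \<le> (\<Prod>i\<in>(UNIV::'d set). N)" unfolding q_def N_def
    by (intro prod_mono) (auto simp: component_le_norm_cart)
  also have "\<dots> = N ^ CARD('d)" by simp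
  also have "\<dots> = N powr (real CARD('d))" using N1 by (simp add: powr_realpow)
  finally have qN: "q \<le> N powr (real CARD('d))" .
  have "q powr p \<le> (N powr (real CARD('d))) powr p" using q1 qN p by (intro powr_mono2) auto
  also have "\<dots> = N powr s" using N1 by (simp add: powr_powr p_def)
  finally have qNs: "q powr p \<le> N powr s" .
  have "N \<le> 2 * norm x" using x by (simp add: N_def)
  then have "N powr s \<le> (2 * norm x) powr s" using N1 s by (intro powr_mono2) auto
  also have "\<dots> = 2 powr s * norm x powr s" by (simp add: powr_mult)
  finally have "q powr p \<le> 2 powr s * norm x powr s" using qNs by linarith
  moreover have "q powr p > 0" using q1 by simp
  ultimately have "inverse (2 powr s * norm x powr s) \<le> inverse (q powr p)"
    by (intro le_imp_inverse_le) auto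
  then have "norm x powr -s / 2 powr s \<le> q powr -p"
    by (simp add: powr_minus divide_inverse mult.commute)
  moreover have "q powr -p = (\<Prod>i\<in>UNIV. (1 + \<bar>x$i\<bar>) powr -p)"
    unfolding q_def by (rule prod_powr_distrib)
  ultimately show ?thesis unfolding p_def by (simp add: field_simps)
qed

lemma lattice_norm_summable:
  fixes s :: real assumes s: "s > CARD('d::finite)"
  shows "(\<lambda>x::real^'d. norm x powr -s) summable_on (int_lattice - {0})"
proof -
  have p: "s / CARD('d) > 1" using s by simp
  have "(\<lambda>x::real^'d. 2 powr s * (\<Prod>i\<in>UNIV. (1 + \<bar>x$i\<bar>) powr -(s / CARD('d)))) summable_on int_lattice"
    by (intro summable_on_cmult_right lattice_prod_summable p)
  then have "(\<lambda>x::real^'d. 2 powr s * (\<Prod>i\<in>UNIV. (1 + \<bar>x$i\<bar>) powr -(s / CARD('d)))) summable_on (int_lattice - {0})"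
    by (rule summable_on_subset) auto
  then show ?thesis
  proof (rule summable_on_comparison_test)
    fix x :: "real^'d" assume "x \<in> int_lattice - {0}"
    then have "norm x \<ge> 1" by (rule lattice_norm_ge1)
    then show "norm x powr -s \<le> 2 powr s * (\<Prod>i\<in>UNIV. (1 + \<bar>x$i\<bar>) powr -(s / CARD('d)))"
      using s by (intro norm_powr_le_prod) auto
  qed simp
qed

lemma key_ineq:
  fixes r t :: real and M :: nat
  assumes r: "r > 0" and y: "y > 0" and b: "b > 0" and M: "real M \<ge> real d + b"
  shows "r^d / (1 + r * y)^M \<le> r powr -b * y powr -(real d + b)"
proof -
  define s where "s = real d + b"
  define t where "t = r * y"
  have t: "t > 0" using r y by (simp add: t_def)
  have s0: "s \<ge> 0" using b by (simp add: s_def)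
  have le: "t powr s \<le> (1 + t)^M"
  proof (cases "t \<ge> 1")
    case True
    have "t powr s \<le> t powr (real M)" using True M by (intro powr_mono) (auto simp: s_def)
    also have "\<dots> = t^M" using t by (simp add: powr_realpow)
    also have "\<dots> \<le> (1 + t)^M" using t by (intro power_mono) auto
    finally show ?thesis .
  next
    case False
    have "t powr s \<le> 1" using False t s0 by (intro powr_le1) auto
    also have "1 \<le> (1 + t)^M" using t by simp
    finally show ?thesis .
  qed
  have tpos: "t powr s > 0" using t by simp
  have "r^d / (1 + t)^M \<le> r^d / t powr s"
    using le tpos r t by (intro divide_left_mono) (auto intro!: mult_pos_pos)
  also have "\<dots> = r^d * (r powr -s * y powr -s)"
    using r y by (simp add: t_def powr_mult powr_minus divide_inverse)
  also have "r^d = r powr real d" using r by (simp add: powr_realpow)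
  also have "r powr real d * (r powr -s * y powr -s) = r powr -b * y powr -s"
    using r by (simp add: s_def powr_add[symmetric] mult.assoc[symmetric])
  finally show ?thesis using r by (simp add: t_def s_def powr_realpow)
qed

lemma dec_final:
  fixes H :: "real \<Rightarrow> real^'d::finite \<Rightarrow> complex"
  assumes "dec H"
  shows "\<forall>\<beta>>0. \<exists>C::real. \<forall>r>0.
           (\<lambda>x. norm (H r x)) summable_on (int_lattice - {0})
         \<and> (\<Sum>\<^sub>\<infinity>x\<in>int_lattice - {0}. norm (H r x)) \<le> C * r powr (- \<beta>)"
proof (intro allI impI)
  fix \<beta> :: real assume b: "\<beta> > 0"
  define d where "d = DIM(real^'d)"
  define s where "s = real d + \<beta>"
  define M where "M = nat \<lceil>s\<rceil>"
  have M: "real M \<ge> real d + \<beta>" unfolding M_def s_def by linarith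
  obtain K where K: "\<forall>r>0. \<forall>y. norm (H r y) \<le> K * r^DIM(real^'d) / (1 + r * norm y)^M"
    using assms unfolding dec_def by blast
  have K0: "0 \<le> K" by (rule dec_K_nonneg[OF K])
  have sd: "s > CARD('d)" using b by (simp add: s_def d_def)
  have S: "(\<lambda>x::real^'d. norm x powr -s) summable_on (int_lattice - {0})"
    by (rule lattice_norm_summable[OF sd])
  define S where "S = (\<Sum>\<^sub>\<infinity>x\<in>int_lattice - {0}. norm (x::real^'d) powr -s)"
  show "\<exists>C::real. \<forall>r>0. (\<lambda>x. norm (H r x)) summable_on (int_lattice - {0})
         \<and> (\<Sum>\<^sub>\<infinity>x\<in>int_lattice - {0}. norm (H r x)) \<le> C * r powr (- \<beta>)"
  proof (intro exI[of _ "K * S"] allI impI)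
    fix r :: real assume r: "r > 0"
    have pt: "norm (H r x) \<le> (K * r powr -\<beta>) * norm x powr -s" if x: "x \<in> int_lattice - {0}" for x
    proof -
      have x1: "norm x \<ge> 1" using x by (rule lattice_norm_ge1)
      have "norm (H r x) \<le> K * (r^d / (1 + r * norm x)^M)" using K r by (simp add: d_def)
      also have "\<dots> \<le> K * (r powr -\<beta> * norm x powr -(real d + \<beta>))"
        using x1 b M r K0 by (intro mult_left_mono key_ineq) auto
      finally show ?thesis by (simp add: s_def mult.assoc)
    qed
    have S2: "(\<lambda>x::real^'d. (K * r powr -\<beta>) * norm x powr -s) summable_on (int_lattice - {0})"
      by (intro summable_on_cmult_right S)
    have sum: "(\<lambda>x. norm (H r x)) summable_on (int_lattice - {0})"
      by (rule summable_on_comparison_test[OF S2 pt]) auto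
    have "(\<Sum>\<^sub>\<infinity>x\<in>int_lattice - {0}. norm (H r x)) \<le> (\<Sum>\<^sub>\<infinity>x\<in>int_lattice - {0}. (K * r powr -\<beta>) * norm (x::real^'d) powr -s)"
      using sum S2 pt by (intro Infinite_Sum.infsum_mono) auto
    also have "\<dots> = (K * r powr -\<beta>) * S" unfolding S_def by (rule infsum_cmult_right) (rule S)
    finally show "(\<lambda>x. norm (H r x)) summable_on (int_lattice - {0})
         \<and> (\<Sum>\<^sub>\<infinity>x\<in>int_lattice - {0}. norm (H r x)) \<le> K * S * r powr (- \<beta>)"
      using sum by (simp add: mult_ac)
  qed
qed


lemma fourier_scale:
  fixes f :: "real^'d::finite \<Rightarrow> complex"
  assumes r: "r > 0"
  shows "fourier (\<lambda>y. f (y /\<^sub>R r)) k = complex_of_real (r^CARD('d)) * fourier f (r *\<^sub>R k)"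
proof -
  have "fourier (\<lambda>y. f (y /\<^sub>R r)) k
      = \<bar>r\<bar>^DIM(real^'d) *\<^sub>R (\<integral>x. f ((0 + r *\<^sub>R x) /\<^sub>R r) * exp (2 * pi * \<i> * complex_of_real (k \<bullet> (0 + r *\<^sub>R x))) \<partial>lborel)"
    unfolding fourier_def using r by (intro integral_affine_eucl) simp
  also have "\<dots> = r^CARD('d) *\<^sub>R (\<integral>x. f x * exp (2 * pi * \<i> * complex_of_real ((r *\<^sub>R k) \<bullet> x)) \<partial>lborel)"
    using r by simp
  also have "\<dots> = complex_of_real (r^CARD('d)) * fourier f (r *\<^sub>R k)"
    by (simp add: fourier_def scaleR_conv_of_real)
  finally show ?thesis .
qed

lemma char_fun_bound:
  assumes "prob_space M"
  shows "norm (char_fun M \<xi> k) \<le> 1"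
proof -
  have "norm (char_fun M \<xi> k) \<le> (\<integral>\<omega>. norm (exp (2 * pi * \<i> * complex_of_real (k \<bullet> \<xi> \<omega>))) \<partial>M)"
    unfolding char_fun_def by (rule integral_norm_bound)
  also have "\<dots> = (\<integral>\<omega>. 1 \<partial>M)" by (simp add: norm_exp_eq_Re)
  also have "\<dots> = 1" using prob_space.prob_space[OF assms] by simp
  finally show ?thesis .
qed

lemma dec_factor:
  fixes f :: "real^'d::finite \<Rightarrow> complex" and M :: "'a measure" and \<xi> :: "'a \<Rightarrow> real^'d"
  assumes sf: "schwartz f" and P: "prob_space M"
  shows "dec (\<lambda>r k. cnj (fourier (\<lambda>y. f (y /\<^sub>R r)) k) * char_fun M \<xi> k)"
  unfolding dec_def
proof (intro allI)
  fix N :: nat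
  obtain K where K: "\<forall>k. norm (fourier f k) \<le> K / (1 + norm k)^N"
    using fourier_decay[OF sf] by blast
  show "\<exists>K. \<forall>r>0. \<forall>y. norm (cnj (fourier (\<lambda>y. f (y /\<^sub>R r)) y) * char_fun M \<xi> y)
                      \<le> K * r ^ DIM(real^'d) / (1 + r * norm y) ^ N"
  proof (intro exI[of _ K] allI impI)
    fix r :: real and k :: "real^'d" assume r: "r > 0"
    have "norm (cnj (fourier (\<lambda>y. f (y /\<^sub>R r)) k) * char_fun M \<xi> k)
        = norm (fourier (\<lambda>y. f (y /\<^sub>R r)) k) * norm (char_fun M \<xi> k)" by (simp add: norm_mult)
    also have "\<dots> \<le> norm (fourier (\<lambda>y. f (y /\<^sub>R r)) k) * 1"
      by (intro mult_left_mono char_fun_bound[OF P]) auto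
    also have "\<dots> = r^CARD('d) * norm (fourier f (r *\<^sub>R k))"
      using r by (simp add: fourier_scale norm_mult norm_power)
    also have "\<dots> \<le> r^CARD('d) * (K / (1 + norm (r *\<^sub>R k))^N)"
    proof (intro mult_left_mono)
      show "norm (fourier f (r *\<^sub>R k)) \<le> K / (1 + norm (r *\<^sub>R k))^N" using K by blast
    qed (use r in auto)
    also have "\<dots> = K * r ^ DIM(real^'d) / (1 + r * norm k) ^ N" using r by simp
    finally show "norm (cnj (fourier (\<lambda>y. f (y /\<^sub>R r)) k) * char_fun M \<xi> k)
                      \<le> K * r ^ DIM(real^'d) / (1 + r * norm k) ^ N" .
  qed
qed

lemma dec_conv_iter:
  fixes G :: "real \<Rightarrow> nat \<Rightarrow> real^'d::finite \<Rightarrow> complex"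
  assumes "\<forall>i\<in>{1..n}. dec (\<lambda>r. G r i)" and "n \<ge> 1"
  shows "dec (\<lambda>r. conv_iter (G r) n)"
  using assms
proof (induction n)
  case 0 then show ?case by simp
next
  case (Suc n)
  show ?case
  proof (cases n)
    case 0
    then show ?thesis using Suc.prems by simp
  next
    case (Suc m)
    have ih: "dec (\<lambda>r. conv_iter (G r) n)" using Suc.IH Suc.prems \<open>n = Suc m\<close> by auto
    have gi: "dec (\<lambda>r. G r (Suc n))" using Suc.prems by auto
    have "dec (\<lambda>r. conv (G r (Suc n)) (conv_iter (G r) n))" by (rule dec_conv[OF gi ih])
    then show ?thesis using \<open>n = Suc m\<close> by simp
  qed
qed

theorem lemma2p2:
  fixes n :: nat
    and f :: "nat \<Rightarrow> real^'d::finite \<Rightarrow> complex"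
    and M :: "'a measure"
    and \<xi> :: "'a \<Rightarrow> real^'d"
  assumes "n \<ge> 1"
    and "\<forall>i\<in>{1..n}. schwartz (f i)"
    and "prob_space M"
    and "\<xi> \<in> borel_measurable M"
  shows "\<forall>\<beta>>0. \<exists>C::real. \<forall>r>0.
           (\<lambda>x. norm (conv_iter (\<lambda>i k. cnj (fourier (\<lambda>y. f i (y /\<^sub>R r)) k) * char_fun M \<xi> k) n x))
             summable_on (int_lattice - {0})
         \<and> (\<Sum>\<^sub>\<infinity>x\<in>int_lattice - {0}.
              norm (conv_iter (\<lambda>i k. cnj (fourier (\<lambda>y. f i (y /\<^sub>R r)) k) * char_fun M \<xi> k) n x))
             \<le> C * r powr (- \<beta>)"
proof -
  have "\<forall>i\<in>{1..n}. dec (\<lambda>r k. cnj (fourier (\<lambda>y. f i (y /\<^sub>R r)) k) * char_fun M \<xi> k)"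
    using assms(2,3) by (auto intro: dec_factor)
  then have "dec (\<lambda>r. conv_iter (\<lambda>i k. cnj (fourier (\<lambda>y. f i (y /\<^sub>R r)) k) * char_fun M \<xi> k) n)"
    using dec_conv_iter[where G = "\<lambda>r i k. cnj (fourier (\<lambda>y. f i (y /\<^sub>R r)) k) * char_fun M \<xi> k"] assms(1)
    by simp
  from dec_final[OF this] show ?thesis by simp
qed

end
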